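(* Let $G$ be a bipartite graph with bipartition $(X,Y)$, $|X| = n\geq 2$, $|Y|=m$, every $x\in X$ having degree at least $\delta$. Let $(C,x)$ be a tight pair in $G$, with $C = y_1x_1y_2x_2\ldots y_\ell x_\ell y_1$ where $x_i \in X$, $y_i\in Y$. If $i \neq j$ and $y_i, y_j \in N(x)$, then $N(x_i)\setminus V(C)$ and $N(x_j)\setminus V(C)$ are disjoint.
   Context: A tight pair in $G$ is a pair $(C,x)$ where $C$ is a longest cycle in $G$ and $x \in X \setminus V(C)$, chosen such that $|N(x)\cap V(C)|$ is maximum over all pairs $(C',x')$ with $C'$ a longest cycle in $G$ and $x' \in X\setminus V(C')$. *)

theory Defs
  imports Main
begin

definition bipartite_graph :: "'a set \<Rightarrow> ('a \<Rightarrow> 'a \<Rightarrow> bool) \<Rightarrow> 'a set \<Rightarrow> 'a set \<Rightarrow> bool" where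
  "bipartite_graph V E X Y \<longleftrightarrow>
     finite V \<and> (\<forall>u v. E u v \<longrightarrow> E v u) \<and> (\<forall>v. \<not> E v v) \<and>
     (\<forall>u v. E u v \<longrightarrow> u \<in> V \<and> v \<in> V) \<and>
     X \<inter> Y = {} \<and> X \<union> Y = V \<and>
     (\<forall>u v. E u v \<longrightarrow> (u \<in> X \<and> v \<in> Y) \<or> (u \<in> Y \<and> v \<in> X))"

definition nbhd :: "('a \<Rightarrow> 'a \<Rightarrow> bool) \<Rightarrow> 'a \<Rightarrow> 'a set" where
  "nbhd E v = {u. E v u}"

definition is_cycle :: "('a \<Rightarrow> 'a \<Rightarrow> bool) \<Rightarrow> 'a list \<Rightarrow> bool" where
  "is_cycle E C \<longleftrightarrow> length C \<ge> 3 \<and> distinct C \<and>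
     (\<forall>i < length C. E (C ! i) (C ! ((i + 1) mod length C)))"

definition longest_cycle :: "('a \<Rightarrow> 'a \<Rightarrow> bool) \<Rightarrow> 'a list \<Rightarrow> bool" where
  "longest_cycle E C \<longleftrightarrow> is_cycle E C \<and> (\<forall>C'. is_cycle E C' \<longrightarrow> length C' \<le> length C)"

definition tight_pair :: "('a \<Rightarrow> 'a \<Rightarrow> bool) \<Rightarrow> 'a set \<Rightarrow> 'a list \<Rightarrow> 'a \<Rightarrow> bool" where
  "tight_pair E X C x \<longleftrightarrow> longest_cycle E C \<and> x \<in> X \<and> x \<notin> set C \<and>
     (\<forall>C' x'. longest_cycle E C' \<and> x' \<in> X \<and> x' \<notin> set C' \<longrightarrow>
        card (nbhd E x' \<inter> set C') \<le> card (nbhd E x \<inter> set C))"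

end

theory Submission
  imports Defs
begin

lemma cycle_succ:
  assumes "is_cycle E C"
  shows "successively E C \<and> E (last C) (hd C)"
proof -
  have L: "length C \<ge> 3" and e: "\<forall>i < length C. E (C ! i) (C ! ((i + 1) mod length C))"
    using assms unfolding is_cycle_def by auto
  have "successively E C"
    unfolding successively_conv_nth
  proof (intro allI impI)
    fix i assume "Suc i < length C"
    then show "E (C ! i) (C ! Suc i)" using e[rule_format, of i] by simp
  qed
  moreover have "E (last C) (hd C)"
  proof -
    have "E (C ! (length C - 1)) (C ! ((length C - 1 + 1) mod length C))"
      using e L by auto
    moreover have "(length C - 1 + 1) mod length C = 0" proof -
      have "length C - 1 + 1 = length C" using L by simp
      then show ?thesis by (metis mod_self)
    qed
    moreover have "C \<noteq> []" using L by auto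
    ultimately show ?thesis by (simp add: last_conv_nth hd_conv_nth)
  qed
  ultimately show ?thesis by blast
qed

lemma succ_cycle:
  assumes "length D \<ge> 3" "distinct D" "successively E D" "E (last D) (hd D)"
  shows "is_cycle E D"
  unfolding is_cycle_def
proof (intro conjI allI impI)
  fix i assume i: "i < length D"
  show "E (D ! i) (D ! ((i + 1) mod length D))"
  proof (cases "Suc i < length D")
    case True
    then show ?thesis using successively_nth[OF assms(3) True] by simp
  next
    case False
    then have "i = length D - 1" using i by simp
    moreover have "(length D - 1 + 1) mod length D = 0" proof -
      have "length D - 1 + 1 = length D" using assms(1) by simp
      then show ?thesis by (metis mod_self)
    qed
    moreover have "D \<noteq> []" using assms(1) by auto
    ultimately show ?thesis using assms(4) by (simp add: last_conv_nth hd_conv_nth)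
  qed
qed (use assms in auto)

lemma main:
  assumes sym: "\<forall>u v. E u v \<longrightarrow> E v u" and lc: "longest_cycle E C"
    and xC: "x \<notin> set C" and zC: "z \<notin> set C" and xz: "x \<noteq> z"
    and pq: "p < q" "q + 1 < length C"
    and e1: "E x (C!p)" and e2: "E x (C!q)" and e3: "E (C!(p+1)) z" and e4: "E (C!(q+1)) z"
  shows False
proof -
  have cyc: "is_cycle E C" using lc unfolding longest_cycle_def by auto
  have sC: "successively E C" and cl: "E (last C) (hd C)" using cycle_succ[OF cyc] by auto
  have dC: "distinct C" using cyc unfolding is_cycle_def by auto
  define A where "A = take (p+1) C"
  define B where "B = take (q-p) (drop (p+1) C)"
  define R where "R = drop (q+1) C"
  have CABR: "C = A @ B @ R"
  proof -
    have "drop (q-p) (drop (p+1) C) = R" unfolding R_def using pq by simp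
    then have "drop (p+1) C = B @ R" unfolding B_def by (metis append_take_drop_id)
    then show ?thesis unfolding A_def by (metis append_take_drop_id)
  qed
  have Ane: "A \<noteq> []" and Bne: "B \<noteq> []" and Rne: "R \<noteq> []"
    using pq unfolding A_def B_def R_def by auto
  have lenA: "length A = p + 1" using pq unfolding A_def by simp
  have lenB: "length B = q - p" using pq unfolding B_def by simp
  have sA: "successively E A" and sB: "successively E B" and sR: "successively E R"
    using sC unfolding CABR by (auto simp: successively_append_iff)
  have sA': "successively (\<lambda>a b. E b a) A" by (rule successively_mono[OF sA]) (use sym in blast)
  have sR': "successively (\<lambda>a b. E b a) R" by (rule successively_mono[OF sR]) (use sym in blast)
  have lastA: "last A = C ! p" unfolding A_def using pq by (simp add: take_Suc_conv_app_nth)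
  have hdC: "hd C = C ! 0" using pq by (cases C) auto
  have hdA: "hd A = C ! 0" unfolding A_def using pq hdC by simp
  have hdB: "hd B = C ! (p+1)" using Bne lenB pq by (simp add: hd_conv_nth B_def)
  have lastB: "last B = C ! q"
  proof -
    have "last B = B ! (q - p - 1)" using Bne lenB by (simp add: last_conv_nth)
    also have "\<dots> = C ! (p + 1 + (q - p - 1))" unfolding B_def using pq by simp
    also have "p + 1 + (q - p - 1) = q" using pq by simp
    finally show ?thesis .
  qed
  have hdR: "hd R = C ! (q+1)" using Rne pq by (simp add: hd_conv_nth R_def)
  have lastR: "last R = last C" unfolding R_def using pq by simp
  define D where "D = x # rev A @ rev R @ z # B"
  have s1: "successively E (z # B)" using sB Bne e3 sym hdB by (simp add: successively_Cons)
  have s2: "successively E (rev R @ z # B)"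
    using s1 sR' Rne e4 hdR by (simp add: successively_append_iff last_rev)
  have s3: "successively E (rev A @ rev R @ z # B)"
  proof -
    have "E (C ! 0) (last C)" using cl sym hdC by auto
    then show ?thesis
      using s2 sA' Ane Rne hdA lastR by (simp add: successively_append_iff last_rev hd_rev)
  qed
  have sD: "successively E D"
    unfolding D_def using s3 Ane e1 lastA by (simp add: successively_Cons hd_rev)
  have lD: "E (last D) (hd D)" unfolding D_def using Bne lastB e2 sym by auto
  have dD: "distinct D" unfolding D_def using dC xC zC xz unfolding CABR by auto
  have lenD: "length D = length C + 2" unfolding D_def CABR by simp
  have "is_cycle E D" using succ_cycle[OF _ dD sD lD] lenD pq by simp
  then have "length D \<le> length C" using lc unfolding longest_cycle_def by auto
  then show False using lenD by simp
qed

theorem claim2: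
  fixes V X Y :: "'a set" and E :: "'a \<Rightarrow> 'a \<Rightarrow> bool" and n m \<delta> i j :: nat
    and C :: "'a list" and x :: 'a
  assumes "bipartite_graph V E X Y"
    and "card X = n" and "n \<ge> 2" and "card Y = m"
    and "\<forall>v\<in>X. card (nbhd E v) \<ge> \<delta>"
    and "tight_pair E X C x"
    and "C ! 0 \<in> Y"
    and "i < length C div 2" and "j < length C div 2" and "i \<noteq> j"
    and "C ! (2 * i) \<in> nbhd E x" and "C ! (2 * j) \<in> nbhd E x"
  shows "(nbhd E (C ! (2 * i + 1)) - set C) \<inter> (nbhd E (C ! (2 * j + 1)) - set C) = {}"
proof (rule ccontr)
  assume "\<not> ?thesis"
  then obtain z where z1: "E (C ! (2 * i + 1)) z" and z2: "E (C ! (2 * j + 1)) z" and zC: "z \<notin> set C"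
    unfolding nbhd_def by auto
  have bg: "\<forall>u v. E u v \<longrightarrow> E v u" "X \<inter> Y = {}"
    "\<forall>u v. E u v \<longrightarrow> (u \<in> X \<and> v \<in> Y) \<or> (u \<in> Y \<and> v \<in> X)"
    using assms(1) unfolding bipartite_graph_def by auto
  have tp: "longest_cycle E C" "x \<in> X" "x \<notin> set C" using assms(6) unfolding tight_pair_def by auto
  have ex: "E x (C ! (2*i))" "E x (C ! (2*j))" using assms(11,12) unfolding nbhd_def by auto
  have sC: "successively E C" using cycle_succ tp(1) unfolding longest_cycle_def by blast
  have ei: "E (C ! (2*i)) (C ! Suc (2*i))"
    using successively_nth[OF sC, of "2*i"] assms(8) by linarith
  have xz: "x \<noteq> z"
  proof
    assume "x = z"
    then have "C ! (2*i+1) \<in> Y" "C ! (2*i) \<in> Y" using z1 ex(1) tp(2) bg(2,3) by blast+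
    then show False using ei bg(2,3) by auto
  qed
  show False
  proof (cases "i < j")
    case True
    have "2*j+1 < length C" using assms(9) by presburger
    moreover have "2*i < 2*j" using True by simp
    ultimately show False using main[OF bg(1) tp(1) tp(3) zC xz _ _ ex(1) ex(2) z1 z2] by blast
  next
    case False
    then have "j < i" using assms(10) by simp
    have "2*i+1 < length C" using assms(8) by presburger
    moreover have "2*j < 2*i" using \<open>j < i\<close> by simp
    ultimately show False using main[OF bg(1) tp(1) tp(3) zC xz _ _ ex(2) ex(1) z2 z1] by blast
  qed
qed

end
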